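(* Under the setting and assumptions (A1)–(A3) below, with $N>L$, let $\widehat{Q}_{N,L}\in\operatorname{argmin}_{Q\in\mathcal{Q}_d}\mathrm{MoM}_L^N(f_Q)$ and $Q^\ast\in\operatorname{argmin}_{Q\in\mathcal{Q}_d}Pf_Q$. Then with probability at least $1-2\exp\!\left(-2L\left(\frac{2}{4+\eta}-\frac{|\mathcal{O}|}{L}\right)^2\right)$, \[\left|Pf_{\widehat{Q}_{N,L}}-Pf_{Q^\ast}\right|\le 2C\max\left\{\sqrt{\frac{L}{N}},\ \frac{\sqrt{|\mathcal{I}|}}{N}\right\},\] with $C=2\max\left\{\sqrt{\frac{8(4+\eta)C(P)}{\eta}},\ \frac{16\sqrt{(p-d)\mu_4}\,(4+\eta)}{\eta}\right\}$ and $C(P)=(\mu_4+2\mu_2^2)(p-d)+(\mu_2^2-1)(p-d)^2$.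
   Context: Data $\boldsymbol{X}_1,\dots,\boldsymbol{X}_N\in\mathbb{R}^p$, with $[N]=\mathcal{I}\cup\mathcal{O}$ a disjoint partition into inliers and outliers; $B_1,\dots,B_L$ a partition of $[N]$ into $L$ blocks each of size $B=N/L$. Assumptions: (A1) $\{\boldsymbol{X}_i\}_{i\in\mathcal{I}}$ are i.i.d. with distribution $P$; (A2) $\mu_4=\int\|\boldsymbol{x}\|^4P(d\boldsymbol{x})<\infty$; (A3) there exists $\eta>0$ with $L>(2+\eta)|\mathcal{O}|$; nothing is assumed about $\{\boldsymbol{X}_i\}_{i\in\mathcal{O}}$. $\mathcal{Q}_d$ is the set of $p\times p$ (orthogonal) projection matrices of rank $d$; $f_Q(\boldsymbol{x})=\boldsymbol{x}^\top(I-Q)\boldsymbol{x}$; $Pf_Q=\int f_Q\,dP$; $P_{B_\ell}f_Q=\frac1B\sum_{i\in B_\ell}f_Q(\boldsymbol{X}_i)$; $\mathrm{MoM}_L^N(f_Q)=\mathrm{Median}\{P_{B_\ell}f_Q:\ell=1,\dots,L\}$; $\mu_k=\int\|\boldsymbol{x}\|_2^k\,dP$. *)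

theory Defs
  imports "HOL-Probability.Probability"
begin

definition proj_mats :: "nat \<Rightarrow> (real^'p^'p) set" where
  "proj_mats d = {Q. transpose Q = Q \<and> Q ** Q = Q \<and> rank Q = d}"

definition fQ :: "real^'p^'p \<Rightarrow> real^'p \<Rightarrow> real" where
  "fQ Q x = x \<bullet> ((mat 1 - Q) *v x)"

definition median :: "real list \<Rightarrow> real" where
  "median xs = (let s = sort xs; n = length xs in
     if odd n then s ! (n div 2) else (s ! (n div 2 - 1) + s ! (n div 2)) / 2)"

definition MoM :: "nat \<Rightarrow> (nat \<Rightarrow> nat set) \<Rightarrow> nat \<Rightarrow> (nat \<Rightarrow> real^'p)
    \<Rightarrow> real^'p^'p \<Rightarrow> real" where
  "MoM L Bl Bsz x Q = median (map (\<lambda>l. (1 / real Bsz) * (\<Sum>i\<in>Bl l. fQ Q (x i))) [1..<L+1])"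

end

theory Submission
  imports Defs
begin

lemma span_expand:
  fixes B :: "(real^'n) set"
  assumes fin: "finite B" and orth: "pairwise orthogonal B" and nrm: "\<And>b. b \<in> B \<Longrightarrow> norm b = 1"
    and y: "y \<in> span B"
  shows "y = (\<Sum>b\<in>B. (b \<bullet> y) *\<^sub>R b)"
proof -
  obtain u where u: "y = (\<Sum>v\<in>B. u v *\<^sub>R v)"
    using y span_finite[OF fin] by auto
  have "b \<bullet> y = u b" if "b \<in> B" for b
  proof -
    have "b \<bullet> y = (\<Sum>v\<in>B. u v * (b \<bullet> v))" by (simp add: u inner_sum_right)
    also have "\<dots> = (\<Sum>v\<in>B. if v = b then u v else 0)"
    proof (rule sum.cong)
      fix v assume v: "v \<in> B"
      show "u v * (b \<bullet> v) = (if v = b then u v else 0)"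
      proof (cases "v = b")
        case True then show ?thesis using nrm[OF that] by (simp add: dot_square_norm)
      next
        case False then show ?thesis using orth v that by (auto simp: pairwise_def orthogonal_def)
      qed
    qed simp
    also have "\<dots> = u b" using fin that by simp
    finally show ?thesis .
  qed
  then show ?thesis by (simp add: u)
qed

lemma msub_l: fixes A B C :: "real^'n^'n" shows "A ** (B - C) = A ** B - A ** C"
  by (simp add: vec_eq_iff matrix_matrix_mult_def sum_subtractf algebra_simps)
lemma msub_r: fixes A B C :: "real^'n^'n" shows "(B - C) ** A = B ** A - C ** A"
  by (simp add: vec_eq_iff matrix_matrix_mult_def sum_subtractf algebra_simps)

lemma trace_proj:
  fixes Q :: "real^'n^'n"
  assumes sym: "transpose Q = Q" and idem: "Q ** Q = Q"
  shows "(\<Sum>i\<in>UNIV. Q$i$i) = real (rank Q)"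
proof -
  define V where "V = range (\<lambda>x. Q *v x)"
  have sub: "subspace V" unfolding V_def
    using linear_subspace_image[OF matrix_vector_mul_linear[of Q] subspace_UNIV] by simp
  obtain B where B: "B \<subseteq> V" "pairwise orthogonal B" "\<And>x. x \<in> B \<Longrightarrow> norm x = 1"
    "independent B" "card B = dim V" "span B = V"
    using orthonormal_basis_subspace[OF sub] by metis
  have fin: "finite B" using B(4) independent_imp_finite by blast
  have Qb: "Q *v b = b" if bB: "b \<in> B" for b
  proof -
    obtain y where "b = Q *v y" using B(1) bB unfolding V_def by blast
    then show ?thesis by (simp add: matrix_vector_mul_assoc idem)
  qed
  have diag: "Q$i$i = (\<Sum>b\<in>B. b$i * b$i)" for i
  proof -
    have "Q *v axis i 1 \<in> span B" using B(6) V_def by auto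
    then have e: "Q *v axis i 1 = (\<Sum>b\<in>B. (b \<bullet> (Q *v axis i 1)) *\<^sub>R b)"
      using span_expand[OF fin B(2) B(3)] by blast
    have bi: "b \<bullet> (Q *v axis i 1) = b$i" if bB: "b \<in> B" for b
    proof -
      have "b \<bullet> (Q *v axis i 1) = (b v* Q) \<bullet> axis i 1" by (simp add: dot_lmul_matrix)
      also have "b v* Q = transpose Q *v b" by (simp add: transpose_matrix_vector)
      also have "\<dots> = b" using sym Qb[OF bB] by simp
      finally show ?thesis by (simp add: inner_axis)
    qed
    have "(\<Sum>b\<in>B. (b \<bullet> (Q *v axis i 1)) *\<^sub>R b) = (\<Sum>b\<in>B. (b$i) *\<^sub>R b)"
      by (rule sum.cong[OF refl]) (simp add: bi)
    then have "Q *v axis i 1 = (\<Sum>b\<in>B. (b$i) *\<^sub>R b)" by (rule trans[OF e])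
    then have "(Q *v axis i 1)$i = (\<Sum>b\<in>B. b$i * b$i)" by simp
    moreover have "(Q *v axis i 1)$i = Q$i$i"
      by (metis matrix_vector_mult_basis column_def vec_lambda_beta)
    ultimately show ?thesis by simp
  qed
  have "(\<Sum>i\<in>UNIV. Q$i$i) = (\<Sum>b\<in>B. \<Sum>i\<in>UNIV. b$i * b$i)"
    unfolding diag by (rule sum.swap)
  also have "\<dots> = (\<Sum>b\<in>B. 1)"
    by (intro sum.cong refl) (use B(3) in \<open>simp add: norm_eq_1 inner_vec_def\<close>)
  also have "\<dots> = real (rank Q)" using B(5) by (simp add: rank_dim_range V_def)
  finally show ?thesis .
qed

lemma frob_proj:
  fixes Q :: "real^'n^'n"
  assumes "Q \<in> proj_mats d"
  shows "(\<Sum>j\<in>UNIV. \<Sum>k\<in>UNIV. ((mat 1 - Q)$j$k)\<^sup>2) = real CARD('n) - real d"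
proof -
  have sym: "transpose Q = Q" and idem: "Q ** Q = Q" and rk: "rank Q = d"
    using assms by (auto simp: proj_mats_def)
  define A where "A = mat 1 - Q"
  have idemA: "A ** A = A" using idem
    by (simp add: A_def msub_l msub_r)
  have "Q$j$k = Q$k$j" for j k using sym by (metis transpose_def vec_lambda_beta)
  then have "A$j$k = A$k$j" for j k by (simp add: A_def mat_def)
  then have "(\<Sum>j\<in>UNIV. \<Sum>k\<in>UNIV. (A$j$k)\<^sup>2) = (\<Sum>j\<in>UNIV. (A ** A)$j$j)"
    by (simp add: matrix_matrix_mult_def power2_eq_square)
  also have "\<dots> = (\<Sum>j\<in>UNIV. A$j$j)" using idemA by simp
  also have "\<dots> = (\<Sum>j\<in>UNIV. 1 - Q$j$j)" by (simp add: A_def mat_def)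
  also have "\<dots> = real CARD('n) - real d" using trace_proj[OF sym idem] rk
    by (simp add: sum_subtractf)
  finally show ?thesis by (simp add: A_def)
qed

lemma sorted_index_in:
  fixes s :: "real list"
  assumes srt: "sorted s" and k: "k < length s"
    and c1: "k < length (filter (\<lambda>v. lo \<le> v \<and> v \<le> hi) s)"
    and c2: "length s - k - 1 < length (filter (\<lambda>v. lo \<le> v \<and> v \<le> hi) s)"
  shows "lo \<le> s!k \<and> s!k \<le> hi"
proof (rule ccontr)
  let ?P = "\<lambda>v::real. lo \<le> v \<and> v \<le> hi"
  assume "\<not> (lo \<le> s!k \<and> s!k \<le> hi)"
  then consider "s!k < lo" | "s!k > hi" by linarith
  then show False
  proof cases
    case 1
    have "filter ?P (take (Suc k) s) = []"
    proof -
      have "\<not> ?P x" if "x \<in> set (take (Suc k) s)" for x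
      proof -
        have "\<exists>i. i \<le> k \<and> x = s!i" using that by (auto simp: in_set_conv_nth less_Suc_eq_le)
        then obtain i where "x = s!i" "i \<le> k" by blast
        then have "x \<le> s!k" using sorted_nth_mono[OF srt] k by blast
        then show ?thesis using 1 by auto
      qed
      then show ?thesis by (simp add: filter_empty_conv)
    qed
    then have "length (filter ?P s) = length (filter ?P (drop (Suc k) s))"
      by (metis append_take_drop_id filter_append self_append_conv2)
    also have "\<dots> \<le> length s - Suc k" by (metis length_drop length_filter_le)
    finally show False using c2 by simp
  next
    case 2
    have "filter ?P (drop k s) = []"
    proof -
      have "\<not> ?P x" if "x \<in> set (drop k s)" for x
      proof -
        have "\<exists>i. k + i < length s \<and> x = s!(k+i)" using that by (auto simp: in_set_conv_nth) (metis less_diff_conv add.commute)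
        then obtain i where "x = s!(k+i)" "k + i < length s" by blast
        then have "s!k \<le> x" using sorted_nth_mono[OF srt, of k "k+i"] by auto
        then show ?thesis using 2 by auto
      qed
      then show ?thesis by (simp add: filter_empty_conv)
    qed
    then have "length (filter ?P s) = length (filter ?P (take k s))"
      by (metis append_take_drop_id filter_append append_Nil2)
    also have "\<dots> \<le> k" by (metis length_take length_filter_le min.boundedE)
    finally show False using c1 by simp
  qed
qed

lemma median_bound:
  fixes xs :: "real list"
  assumes cnt: "length xs < 2 * length (filter (\<lambda>v. lo \<le> v \<and> v \<le> hi) xs)"
  shows "lo \<le> median xs \<and> median xs \<le> hi"
proof -
  let ?P = "\<lambda>v::real. lo \<le> v \<and> v \<le> hi"
  define s where "s = sort xs"
  define n where "n = length xs"
  define c where "c = length (filter ?P s)"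
  have srt: "sorted s" and ls: "length s = n" by (simp_all add: s_def n_def)
  have "c = length (filter ?P xs)" unfolding c_def s_def
    by (metis mset_filter mset_sort size_mset)
  then have cn: "n < 2 * c" using cnt n_def by simp
  have cle: "c \<le> n" unfolding c_def using ls by (metis length_filter_le)
  have inb: "lo \<le> s!k \<and> s!k \<le> hi" if "k < n" "k < c" "n - k - 1 < c" for k
    using sorted_index_in[OF srt] that ls c_def by simp
  show ?thesis
  proof (cases "odd n")
    case True
    then have "median xs = s ! (n div 2)" by (simp add: median_def s_def n_def Let_def)
    moreover have "lo \<le> s!(n div 2) \<and> s!(n div 2) \<le> hi"
      using True cn cle by (intro inb) (auto elim!: oddE)
    ultimately show ?thesis by simp
  next
    case False
    then have m: "median xs = (s ! (n div 2 - 1) + s ! (n div 2)) / 2"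
      by (simp add: median_def s_def n_def Let_def)
    have a: "lo \<le> s!(n div 2) \<and> s!(n div 2) \<le> hi"
      using False cn cle by (intro inb) (auto elim!: evenE)
    have b: "lo \<le> s!(n div 2 - 1) \<and> s!(n div 2 - 1) \<le> hi"
      using False cn cle by (intro inb) (auto elim!: evenE)
    show ?thesis using a b m by simp
  qed
qed

lemma meas_comp [measurable]: "(\<lambda>x::real^'n. x $ j) \<in> borel_measurable borel"
  by (intro borel_measurable_continuous_onI continuous_intros)

lemma sq_le: "\<bar>(x::real^'n)$j * x$k\<bar> \<le> norm x ^ 2"
proof -
  have "\<bar>x$j * x$k\<bar> = \<bar>x$j\<bar> * \<bar>x$k\<bar>" by (simp add: abs_mult)
  also have "\<dots> \<le> norm x * norm x"
    by (intro mult_mono component_le_norm_cart) auto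
  finally show ?thesis by (simp add: power2_eq_square)
qed

lemma t2: "(t::real)^2 \<le> 1 + t^4"
proof -
  have "0 \<le> (t^2 - 1)^2 + t^2" by simp
  also have "\<dots> = t^4 - t^2 + 1" by (simp add: power2_diff power_mult[symmetric])
  finally show ?thesis by simp
qed

lemma sq_le2: "((x::real^'n)$j * x$k)\<^sup>2 \<le> norm x ^ 4"
proof -
  have "((x::real^'n)$j * x$k)\<^sup>2 = \<bar>x$j * x$k\<bar>\<^sup>2" by simp
  also have "\<dots> \<le> (norm x ^ 2)\<^sup>2" by (rule power_mono[OF sq_le]) simp
  finally show ?thesis by simp
qed

lemma int_prod:
  fixes P :: "(real^'n) measure"
  assumes P: "prob_space P" and sP: "sets P = sets borel" and A2: "integrable P (\<lambda>x. norm x ^ 4)"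
  shows "integrable P (\<lambda>x. x$j * x$k)"
proof (rule Bochner_Integration.integrable_bound[where f="\<lambda>x. 1 + norm x ^ 4"])
  interpret prob_space P by fact
  show "integrable P (\<lambda>x. 1 + norm x ^ 4)" using A2 by simp
  show "(\<lambda>x. x$j * x$k) \<in> borel_measurable P" unfolding measurable_cong_sets[OF sP refl] by measurable
  show "AE x in P. norm (x$j * x$k) \<le> norm (1 + norm x ^ 4)"
  proof (rule AE_I2)
    fix x :: "real^'n"
    have "norm (x$j * x$k) \<le> norm x ^ 2" using sq_le by simp
    also have "\<dots> \<le> 1 + norm x ^ 4" by (rule t2)
    also have "\<dots> = norm (1 + norm x ^ 4)" by simp
    finally show "norm (x$j * x$k) \<le> norm (1 + norm x ^ 4)" .
  qed
qed

lemma int_prod2: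
  fixes P :: "(real^'n) measure"
  assumes P: "prob_space P" and sP: "sets P = sets borel" and A2: "integrable P (\<lambda>x. norm x ^ 4)"
  shows "integrable P (\<lambda>x. (x$j * x$k - c)\<^sup>2)"
proof -
  have "integrable P (\<lambda>x. (x$j * x$k)\<^sup>2)"
  proof (rule Bochner_Integration.integrable_bound[where f="\<lambda>x. norm x ^ 4"])
    show "integrable P (\<lambda>x. norm x ^ 4)" by fact
    show "(\<lambda>x. (x$j * x$k)\<^sup>2) \<in> borel_measurable P" unfolding measurable_cong_sets[OF sP refl] by measurable
    show "AE x in P. norm ((x$j * x$k)\<^sup>2) \<le> norm (norm x ^ 4)"
      by (rule AE_I2) (simp add: sq_le2)
  qed
  moreover have "integrable P (\<lambda>x. x$j * x$k)" by (rule int_prod[OF assms])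
  ultimately have "integrable P (\<lambda>x. (x$j * x$k)\<^sup>2 - 2 * c * (x$j * x$k) + c\<^sup>2)"
    using prob_space.finite_measure[OF P] by (intro Bochner_Integration.integrable_add Bochner_Integration.integrable_diff) (auto intro: finite_measure.integrable_const)
  then show ?thesis by (simp add: power2_diff algebra_simps)
qed

lemma fQ_expand: "fQ Q y = (\<Sum>j\<in>UNIV. \<Sum>k\<in>UNIV. (mat 1 - Q)$j$k * (y$j * y$k))"
  by (simp add: fQ_def inner_vec_def matrix_vector_mult_def sum_distrib_left algebra_simps)

definition mom2 :: "(real^'n) measure \<Rightarrow> 'n \<Rightarrow> 'n \<Rightarrow> real" where
  "mom2 P j k = (\<integral>x. x$j * x$k \<partial>P)"

definition Dev :: "(real^'n) measure \<Rightarrow> nat set \<Rightarrow> (nat \<Rightarrow> real^'n) \<Rightarrow> real" where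
  "Dev P S x = (\<Sum>j\<in>UNIV. \<Sum>k\<in>UNIV. ((1 / real (card S)) * (\<Sum>i\<in>S. x i $ j * x i $ k) - mom2 P j k)\<^sup>2)"

lemma cs_double:
  fixes a e :: "'n::finite \<Rightarrow> 'n \<Rightarrow> real"
  shows "\<bar>\<Sum>j\<in>UNIV. \<Sum>k\<in>UNIV. a j k * e j k\<bar>
     \<le> sqrt (\<Sum>j\<in>UNIV. \<Sum>k\<in>UNIV. (a j k)\<^sup>2) * sqrt (\<Sum>j\<in>UNIV. \<Sum>k\<in>UNIV. (e j k)\<^sup>2)"
proof -
  have "\<bar>\<Sum>j\<in>UNIV. \<Sum>k\<in>UNIV. a j k * e j k\<bar> = \<bar>\<Sum>p\<in>UNIV\<times>UNIV. a (fst p) (snd p) * e (fst p) (snd p)\<bar>"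
    by (simp add: sum.cartesian_product case_prod_beta')
  also have "\<dots> \<le> (\<Sum>p\<in>UNIV\<times>UNIV. \<bar>a (fst p) (snd p)\<bar> * \<bar>e (fst p) (snd p)\<bar>)"
    by (metis (no_types, lifting) abs_mult sum.cong sum_abs)
  also have "\<dots> \<le> L2_set (\<lambda>p. a (fst p) (snd p)) (UNIV\<times>UNIV) * L2_set (\<lambda>p. e (fst p) (snd p)) (UNIV\<times>UNIV)"
    by (rule L2_set_mult_ineq)
  also have "\<dots> = sqrt (\<Sum>j\<in>UNIV. \<Sum>k\<in>UNIV. (a j k)\<^sup>2) * sqrt (\<Sum>j\<in>UNIV. \<Sum>k\<in>UNIV. (e j k)\<^sup>2)"
    by (simp add: L2_set_def sum.cartesian_product case_prod_beta')
  finally show ?thesis .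
qed

lemma dev_bound:
  fixes P :: "(real^'n) measure" and Q :: "real^'n^'n"
  assumes Q: "Q \<in> proj_mats d" and P: "prob_space P" and sP: "sets P = sets borel"
    and A2: "integrable P (\<lambda>x. norm x ^ 4)" and fin: "finite S"
  shows "\<bar>(1 / real (card S)) * (\<Sum>i\<in>S. fQ Q (x i)) - (\<integral>y. fQ Q y \<partial>P)\<bar>
           \<le> sqrt (real CARD('n) - real d) * sqrt (Dev P S x)"
proof -
  define a where "a j k = (mat 1 - Q)$j$k" for j k
  define c where "c = 1 / real (card S)"
  have e1: "c * (\<Sum>i\<in>S. fQ Q (x i)) = (\<Sum>j\<in>UNIV. \<Sum>k\<in>UNIV. a j k * (c * (\<Sum>i\<in>S. x i $ j * x i $ k)))"
    unfolding fQ_expand a_def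
    by (simp add: sum_distrib_left algebra_simps sum.swap[of _ S])
  have e2: "(\<integral>y. fQ Q y \<partial>P) = (\<Sum>j\<in>UNIV. \<Sum>k\<in>UNIV. a j k * mom2 P j k)"
    unfolding fQ_expand a_def mom2_def
    using int_prod[OF P sP A2]
    by (simp add: Bochner_Integration.integral_sum Bochner_Integration.integrable_sum)
  have "c * (\<Sum>i\<in>S. fQ Q (x i)) - (\<integral>y. fQ Q y \<partial>P)
     = (\<Sum>j\<in>UNIV. \<Sum>k\<in>UNIV. a j k * (c * (\<Sum>i\<in>S. x i $ j * x i $ k) - mom2 P j k))"
    unfolding e1 e2 by (simp add: sum_subtractf algebra_simps)
  also have "\<bar>\<dots>\<bar> \<le> sqrt (\<Sum>j\<in>UNIV. \<Sum>k\<in>UNIV. (a j k)\<^sup>2) * sqrt (Dev P S x)"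
    unfolding Dev_def c_def by (rule cs_double)
  also have "(\<Sum>j\<in>UNIV. \<Sum>k\<in>UNIV. (a j k)\<^sup>2) = real CARD('n) - real d"
    unfolding a_def by (rule frob_proj[OF Q])
  finally show ?thesis by (simp add: c_def)
qed

lemma indep_sq_sum:
  fixes M :: "'w measure" and X :: "nat \<Rightarrow> 'w \<Rightarrow> real^'p" and g :: "real^'p \<Rightarrow> real"
    and P :: "(real^'p) measure"
  assumes M: "prob_space M" and SI: "S \<subseteq> I" and fin: "finite S"
    and meas: "\<And>i. i \<in> I \<Longrightarrow> X i \<in> measurable M borel"
    and ind: "prob_space.indep_vars M (\<lambda>_. borel) X I"
    and distr: "\<And>i. i \<in> I \<Longrightarrow> distr M borel (X i) = P"
    and gm: "g \<in> borel_measurable borel"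
    and g2: "integrable P (\<lambda>y. (g y)\<^sup>2)" and g1: "integrable P g" and g0: "(\<integral>y. g y \<partial>P) = 0"
  shows "integrable M (\<lambda>\<omega>. (\<Sum>i\<in>S. g (X i \<omega>))\<^sup>2)"
    and "(\<integral>\<omega>. (\<Sum>i\<in>S. g (X i \<omega>))\<^sup>2 \<partial>M) = real (card S) * (\<integral>y. (g y)\<^sup>2 \<partial>P)"
proof -
  interpret prob_space M by fact
  define Y where "Y i \<omega> = g (X i \<omega>)" for i \<omega>
  have tr1: "integrable M (Y i)" "(\<integral>\<omega>. Y i \<omega> \<partial>M) = 0" if "i \<in> I" for i
  proof -
    have "integrable (distr M borel (X i)) g" using g1 distr[OF that] by simp
    then show "integrable M (Y i)" unfolding Y_def
      using integrable_distr_eq[OF meas[OF that] gm] by simp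
    have "(\<integral>y. g y \<partial>distr M borel (X i)) = (\<integral>\<omega>. Y i \<omega> \<partial>M)"
      unfolding Y_def by (rule integral_distr[OF meas[OF that] gm])
    then show "(\<integral>\<omega>. Y i \<omega> \<partial>M) = 0" using g0 distr[OF that] by simp
  qed
  have tr2: "integrable M (\<lambda>\<omega>. (Y i \<omega>)\<^sup>2)" "(\<integral>\<omega>. (Y i \<omega>)\<^sup>2 \<partial>M) = (\<integral>y. (g y)\<^sup>2 \<partial>P)" if "i \<in> I" for i
  proof -
    have gm2: "(\<lambda>y. (g y)\<^sup>2) \<in> borel_measurable borel" using gm by measurable
    have "integrable (distr M borel (X i)) (\<lambda>y. (g y)\<^sup>2)" using g2 distr[OF that] by simp
    then show "integrable M (\<lambda>\<omega>. (Y i \<omega>)\<^sup>2)" unfolding Y_def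
      using integrable_distr_eq[OF meas[OF that] gm2] by simp
    have "(\<integral>y. (g y)\<^sup>2 \<partial>distr M borel (X i)) = (\<integral>\<omega>. (Y i \<omega>)\<^sup>2 \<partial>M)"
      unfolding Y_def by (rule integral_distr[OF meas[OF that] gm2])
    then show "(\<integral>\<omega>. (Y i \<omega>)\<^sup>2 \<partial>M) = (\<integral>y. (g y)\<^sup>2 \<partial>P)" using distr[OF that] by simp
  qed
  have indY: "indep_vars (\<lambda>_. borel) Y I"
    unfolding Y_def using indep_vars_compose2[OF ind, of "\<lambda>_. g" "\<lambda>_. borel"] gm by simp
  have cross: "integrable M (\<lambda>\<omega>. Y i \<omega> * Y i' \<omega>) \<and>
      (\<integral>\<omega>. Y i \<omega> * Y i' \<omega> \<partial>M) = (if i = i' then (\<integral>y. (g y)\<^sup>2 \<partial>P) else 0)"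
    if "i \<in> S" "i' \<in> S" for i i'
  proof (cases "i = i'")
    case True
    then show ?thesis using tr2[of i] that SI by (auto simp: power2_eq_square)
  next
    case False
    have sub: "{i, i'} \<subseteq> I" using that SI by auto
    have ind2: "indep_vars (\<lambda>_. borel) Y {i, i'}" by (rule indep_vars_subset[OF indY sub])
    have int2: "\<And>l. l \<in> {i, i'} \<Longrightarrow> integrable M (Y l)" using tr1 sub by auto
    have pe: "(\<lambda>\<omega>. \<Prod>l\<in>{i, i'}. Y l \<omega>) = (\<lambda>\<omega>. Y i \<omega> * Y i' \<omega>)" using False by simp
    have "integrable M (\<lambda>\<omega>. \<Prod>l\<in>{i, i'}. Y l \<omega>)"
      by (rule indep_vars_integrable[OF _ ind2 int2]) auto
    moreover have "(\<integral>\<omega>. (\<Prod>l\<in>{i, i'}. Y l \<omega>) \<partial>M) = (\<Prod>l\<in>{i, i'}. \<integral>\<omega>. Y l \<omega> \<partial>M)"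
      by (rule indep_vars_lebesgue_integral[OF _ ind2 int2]) auto
    ultimately show ?thesis using False pe tr1 sub by auto
  qed
  have sq: "(\<Sum>i\<in>S. g (X i \<omega>))\<^sup>2 = (\<Sum>i\<in>S. \<Sum>i'\<in>S. Y i \<omega> * Y i' \<omega>)" for \<omega>
    unfolding Y_def by (simp add: power2_eq_square sum_product)
  show "integrable M (\<lambda>\<omega>. (\<Sum>i\<in>S. g (X i \<omega>))\<^sup>2)"
    unfolding sq using cross by (intro Bochner_Integration.integrable_sum) auto
  have "(\<integral>\<omega>. (\<Sum>i\<in>S. g (X i \<omega>))\<^sup>2 \<partial>M) = (\<Sum>i\<in>S. \<Sum>i'\<in>S. \<integral>\<omega>. Y i \<omega> * Y i' \<omega> \<partial>M)"
    unfolding sq using cross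
    by (simp add: Bochner_Integration.integral_sum Bochner_Integration.integrable_sum)
  also have "\<dots> = (\<Sum>i\<in>S. \<Sum>i'\<in>S. if i = i' then (\<integral>y. (g y)\<^sup>2 \<partial>P) else 0)"
    using cross by (intro sum.cong refl) auto
  also have "\<dots> = real (card S) * (\<integral>y. (g y)\<^sup>2 \<partial>P)" using fin by simp
  finally show "(\<integral>\<omega>. (\<Sum>i\<in>S. g (X i \<omega>))\<^sup>2 \<partial>M) = real (card S) * (\<integral>y. (g y)\<^sup>2 \<partial>P)" .
qed

lemma norm4_expand: "norm (y::real^'n) ^ 4 = (\<Sum>j\<in>UNIV. \<Sum>k\<in>UNIV. (y$j * y$k)\<^sup>2)"
proof -
  have "norm y ^ 2 = (\<Sum>j\<in>UNIV. (y$j)\<^sup>2)"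
    by (simp add: norm_vec_def L2_set_def sum_nonneg)
  then have "norm y ^ 4 = (\<Sum>j\<in>UNIV. (y$j)\<^sup>2) * (\<Sum>k\<in>UNIV. (y$k)\<^sup>2)"
    by (metis power2_eq_square power_mult numeral_times_numeral semiring_norm(12) semiring_norm(13)
        mult_2 numeral_Bit0 power_add)
  also have "\<dots> = (\<Sum>j\<in>UNIV. \<Sum>k\<in>UNIV. (y$j * y$k)\<^sup>2)"
    by (simp add: sum_product power_mult_distrib)
  finally show ?thesis .
qed

lemma var_le:
  fixes P :: "(real^'n) measure"
  assumes P: "prob_space P" and sP: "sets P = sets borel" and A2: "integrable P (\<lambda>x. norm x ^ 4)"
  shows "(\<integral>y. (y$j * y$k - mom2 P j k)\<^sup>2 \<partial>P) \<le> (\<integral>y. (y$j * y$k)\<^sup>2 \<partial>P)"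
proof -
  interpret prob_space P by fact
  define m where "m = mom2 P j k"
  have i1: "integrable P (\<lambda>y. y$j * y$k)" by (rule int_prod[OF P sP A2])
  have i2: "integrable P (\<lambda>y. (y$j * y$k)\<^sup>2)" using int_prod2[OF P sP A2, of j k 0] by simp
  have "(\<integral>y. (y$j * y$k - m)\<^sup>2 \<partial>P) = (\<integral>y. (y$j * y$k)\<^sup>2 - 2 * m * (y$j * y$k) + m\<^sup>2 \<partial>P)"
    by (simp add: power2_diff algebra_simps)
  also have "\<dots> = (\<integral>y. (y$j * y$k)\<^sup>2 \<partial>P) - 2 * m * (\<integral>y. y$j * y$k \<partial>P) + m\<^sup>2"
    using i1 i2 by (simp add: prob_space)
  also have "\<dots> = (\<integral>y. (y$j * y$k)\<^sup>2 \<partial>P) - m\<^sup>2" by (simp add: m_def mom2_def power2_eq_square)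
  finally show ?thesis by (simp add: m_def)
qed

lemma exp_Dev:
  fixes M :: "'w measure" and X :: "nat \<Rightarrow> 'w \<Rightarrow> real^'p" and P :: "(real^'p) measure"
  assumes M: "prob_space M" and SI: "S \<subseteq> I" and fin: "finite S" and Sne: "S \<noteq> {}"
    and meas: "\<And>i. i \<in> I \<Longrightarrow> X i \<in> measurable M borel"
    and ind: "prob_space.indep_vars M (\<lambda>_. borel) X I"
    and distr: "\<And>i. i \<in> I \<Longrightarrow> distr M borel (X i) = P"
    and P: "prob_space P" and sP: "sets P = sets borel" and A2: "integrable P (\<lambda>x. norm x ^ 4)"
  shows "integrable M (\<lambda>\<omega>. Dev P S (\<lambda>i. X i \<omega>))"
    and "(\<integral>\<omega>. Dev P S (\<lambda>i. X i \<omega>) \<partial>M) \<le> (\<integral>y. norm y ^ 4 \<partial>P) / real (card S)"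
proof -
  define B where "B = real (card S)"
  have Bpos: "B > 0" using fin Sne by (simp add: B_def card_gt_0_iff)
  define g where "g j k y = y$j * y$k - mom2 P j k" for j k and y :: "real^'p"
  have gm: "g j k \<in> borel_measurable borel" for j k unfolding g_def by measurable
  have g2: "integrable P (\<lambda>y. (g j k y)\<^sup>2)" for j k unfolding g_def by (rule int_prod2[OF P sP A2])
  have g1: "integrable P (g j k)" for j k
    using int_prod[OF P sP A2] prob_space.finite_measure[OF P] unfolding g_def
    by (intro Bochner_Integration.integrable_diff finite_measure.integrable_const) auto
  have g0: "(\<integral>y. g j k y \<partial>P) = 0" for j k
    using int_prod[OF P sP A2, of j k] prob_space.prob_space[OF P] prob_space.finite_measure[OF P] unfolding g_def mom2_def
    by (simp add: Bochner_Integration.integral_diff finite_measure.integrable_const)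
  note ISS = indep_sq_sum[OF M SI fin meas ind distr gm g2 g1 g0]
  have trm: "((1 / real (card S)) * (\<Sum>i\<in>S. X i \<omega> $ j * X i \<omega> $ k) - mom2 P j k)\<^sup>2
      = (1 / B)\<^sup>2 * (\<Sum>i\<in>S. g j k (X i \<omega>))\<^sup>2" for j k \<omega>
  proof -
    have "(\<Sum>i\<in>S. g j k (X i \<omega>)) = (\<Sum>i\<in>S. X i \<omega> $ j * X i \<omega> $ k) - B * mom2 P j k"
      by (simp add: g_def sum_subtractf B_def)
    then have "(1 / B) * (\<Sum>i\<in>S. g j k (X i \<omega>)) = (1 / B) * (\<Sum>i\<in>S. X i \<omega> $ j * X i \<omega> $ k) - mom2 P j k"
      using Bpos by (simp add: field_simps)
    then show ?thesis by (simp add: B_def power_mult_distrib[symmetric])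
  qed
  have DevE: "Dev P S (\<lambda>i. X i \<omega>) = (\<Sum>j\<in>UNIV. \<Sum>k\<in>UNIV. (1 / B)\<^sup>2 * (\<Sum>i\<in>S. g j k (X i \<omega>))\<^sup>2)" for \<omega>
    unfolding Dev_def trm ..
  show "integrable M (\<lambda>\<omega>. Dev P S (\<lambda>i. X i \<omega>))"
    unfolding DevE using ISS(1) by auto
  have "(\<integral>\<omega>. Dev P S (\<lambda>i. X i \<omega>) \<partial>M) = (\<Sum>j\<in>UNIV. \<Sum>k\<in>UNIV. (1 / B)\<^sup>2 * (B * (\<integral>y. (g j k y)\<^sup>2 \<partial>P)))"
    unfolding DevE using ISS by (simp add: Bochner_Integration.integral_sum Bochner_Integration.integrable_sum B_def)
  also have "\<dots> = (\<Sum>j\<in>UNIV. \<Sum>k\<in>UNIV. (\<integral>y. (g j k y)\<^sup>2 \<partial>P)) / B"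
    using Bpos by (simp add: sum_divide_distrib power2_eq_square)
  also have "\<dots> \<le> (\<Sum>j\<in>UNIV. \<Sum>k\<in>UNIV. (\<integral>y. (y$j * y$k)\<^sup>2 \<partial>P)) / B"
    using Bpos unfolding g_def by (intro divide_right_mono sum_mono var_le[OF P sP A2]) auto
  also have "(\<Sum>j\<in>UNIV. \<Sum>k\<in>UNIV. (\<integral>y. (y$j * y$k)\<^sup>2 \<partial>P)) = (\<integral>y. norm y ^ 4 \<partial>P)"
    unfolding norm4_expand using int_prod2[OF P sP A2, of _ _ 0]
    by (simp add: Bochner_Integration.integral_sum Bochner_Integration.integrable_sum)
  finally show "(\<integral>\<omega>. Dev P S (\<lambda>i. X i \<omega>) \<partial>M) \<le> (\<integral>y. norm y ^ 4 \<partial>P) / real (card S)"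
    by (simp add: B_def)
qed

lemma Dev_cong:
  assumes "\<And>i. i \<in> S \<Longrightarrow> f i = f' i" shows "Dev P S f = Dev P S f'"
proof -
  have "(\<Sum>i\<in>S. f i $ j * f i $ k) = (\<Sum>i\<in>S. f' i $ j * f' i $ k)" for j k
    by (rule sum.cong) (auto simp: assms)
  then show ?thesis by (simp add: Dev_def)
qed

lemma Dev_nonneg: "0 \<le> Dev P S f"
  unfolding Dev_def by (simp add: sum_nonneg)

lemma Dev_meas: "(\<lambda>f. Dev P S f) \<in> borel_measurable (Pi\<^sub>M S (\<lambda>_. borel :: (real^'n) measure))"
proof -
  have m: "(\<lambda>f. f i $ j * f i $ k) \<in> borel_measurable (Pi\<^sub>M S (\<lambda>_. borel :: (real^'n) measure))"
    if i: "i \<in> S" for i j k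
  proof -
    have c: "(\<lambda>f. f i) \<in> measurable (Pi\<^sub>M S (\<lambda>_. borel :: (real^'n) measure)) borel"
      by (rule measurable_component_singleton[OF i])
    show ?thesis
      by (intro borel_measurable_times measurable_compose[OF c meas_comp])
  qed
  show ?thesis unfolding Dev_def
    by (intro borel_measurable_sum borel_measurable_power borel_measurable_diff borel_measurable_times
      borel_measurable_const m)
qed

lemma block_hoeffding:
  fixes M :: "'w measure" and X :: "nat \<Rightarrow> 'w \<Rightarrow> real^'p" and P :: "(real^'p) measure"
    and Bl :: "nat \<Rightarrow> nat set" and K :: "nat set"
  assumes M: "prob_space M"
    and meas: "\<And>i. i \<in> I \<Longrightarrow> X i \<in> measurable M borel"
    and ind: "prob_space.indep_vars M (\<lambda>_. borel) X I"
    and distr: "\<And>i. i \<in> I \<Longrightarrow> distr M borel (X i) = P"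
    and P: "prob_space P" and sP: "sets P = sets borel" and A2: "integrable P (\<lambda>x. norm x ^ 4)"
    and finK: "finite K" and neK: "K \<noteq> {}"
    and blk: "\<And>l. l \<in> K \<Longrightarrow> Bl l \<subseteq> I \<and> finite (Bl l) \<and> Bl l \<noteq> {}"
    and disj: "disjoint_family_on Bl K"
    and s2: "s2 > 0"
    and qb: "\<And>l. l \<in> K \<Longrightarrow> (\<integral>y. norm y ^ 4 \<partial>P) / real (card (Bl l)) / s2 \<le> q"
    and c: "c \<ge> q * real (card K)"
  shows "{\<omega> \<in> space M. c \<le> (\<Sum>l\<in>K. if s2 \<le> Dev P (Bl l) (\<lambda>i. X i \<omega>) then 1 else 0)} \<in> sets M"
    and "measure M {\<omega> \<in> space M. c \<le> (\<Sum>l\<in>K. if s2 \<le> Dev P (Bl l) (\<lambda>i. X i \<omega>) then 1 else 0)}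
          \<le> exp (- 2 * (c - q * real (card K))\<^sup>2 / real (card K))"
proof -
  interpret prob_space M by fact
  define Z where "Z l \<omega> = (if s2 \<le> Dev P (Bl l) (\<lambda>i. X i \<omega>) then 1 else (0::real))" for l \<omega>
  note ED = exp_Dev[OF M _ _ _ meas ind distr P sP A2]
  have Dm: "(\<lambda>\<omega>. Dev P (Bl l) (\<lambda>i. X i \<omega>)) \<in> borel_measurable M" if "l \<in> K" for l
    using ED(1)[of "Bl l"] blk[OF that] by auto
  have Zm: "Z l \<in> borel_measurable M" if "l \<in> K" for l
    unfolding Z_def using Dm[OF that] by measurable
  have indZ: "indep_vars (\<lambda>_. borel) Z K"
  proof -
    have r: "indep_vars (\<lambda>l. Pi\<^sub>M (Bl l) (\<lambda>_. borel)) (\<lambda>l \<omega>. restrict (\<lambda>i. X i \<omega>) (Bl l)) K"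
      by (rule indep_vars_restrict[OF ind]) (use blk disj in auto)
    define h where "h l f = (if s2 \<le> Dev P (Bl l) f then 1 else (0::real))" for l f
    have hm: "h l \<in> measurable (Pi\<^sub>M (Bl l) (\<lambda>_. borel)) borel" for l
      unfolding h_def using Dev_meas[of P "Bl l"] by measurable
    have "indep_vars (\<lambda>_. borel) (\<lambda>l \<omega>. h l (restrict (\<lambda>i. X i \<omega>) (Bl l))) K"
      by (rule indep_vars_compose2[OF r hm])
    moreover have "(\<lambda>l \<omega>. h l (restrict (\<lambda>i. X i \<omega>) (Bl l))) = Z"
      unfolding h_def Z_def by (intro ext) (simp add: Dev_cong[of "Bl _" "restrict _ _" "\<lambda>i. X i _"])
    ultimately show ?thesis by simp
  qed
  define \<mu> where "\<mu> = (\<Sum>l\<in>K. expectation (Z l))"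
  interpret H: Hoeffding_ineq M K Z "\<lambda>_. 0" "\<lambda>_. 1" \<mu>
    by unfold_locales (auto simp: finK indZ Z_def \<mu>_def)
  have EZ: "expectation (Z l) \<le> q" if l: "l \<in> K" for l
  proof -
    have "Z l = indicator {\<omega>. s2 \<le> Dev P (Bl l) (\<lambda>i. X i \<omega>)}" by (auto simp: Z_def fun_eq_iff)
    then have "expectation (Z l) = prob {\<omega>\<in>space M. s2 \<le> Dev P (Bl l) (\<lambda>i. X i \<omega>)}"
      by (simp add: Int_def conj_commute)
    also have "\<dots> \<le> (\<integral>\<omega>. Dev P (Bl l) (\<lambda>i. X i \<omega>) \<partial>M) / s2"
      using ED(1)[of "Bl l"] blk[OF l] s2
      by (intro integral_Markov_inequality_measure[where A="space M"]) (auto simp: Dev_nonneg)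
    also have "\<dots> \<le> (\<integral>y. norm y ^ 4 \<partial>P) / real (card (Bl l)) / s2"
      using ED(2)[of "Bl l"] blk[OF l] s2 by (intro divide_right_mono) auto
    also have "\<dots> \<le> q" by (rule qb[OF l])
    finally show ?thesis .
  qed
  have mu: "\<mu> \<le> q * real (card K)"
    unfolding \<mu>_def using sum_mono[of K "\<lambda>l. expectation (Z l)" "\<lambda>_. q"] EZ by (auto simp: mult.commute)
  have cardK: "(\<Sum>i\<in>K. ((\<lambda>_. 1::real) i - (\<lambda>_. 0) i)\<^sup>2) = real (card K)" by simp
  have eps: "c - \<mu> \<ge> c - q * real (card K)" "c - q * real (card K) \<ge> 0" using mu c by auto
  have "prob {\<omega>\<in>space M. (\<Sum>l\<in>K. Z l \<omega>) \<ge> \<mu> + (c - \<mu>)}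
      \<le> exp (-2 * (c - \<mu>)\<^sup>2 / (\<Sum>i\<in>K. ((\<lambda>_. 1::real) i - (\<lambda>_. 0) i)\<^sup>2))"
    by (rule H.Hoeffding_ineq_ge) (use eps finK neK in \<open>auto simp: card_gt_0_iff\<close>)
  also have "\<dots> \<le> exp (- 2 * (c - q * real (card K))\<^sup>2 / real (card K))"
    unfolding cardK using eps finK neK
    by (auto simp: card_gt_0_iff divide_right_mono power_mono intro!: divide_right_mono power_mono)
  finally show "measure M {\<omega> \<in> space M. c \<le> (\<Sum>l\<in>K. if s2 \<le> Dev P (Bl l) (\<lambda>i. X i \<omega>) then 1 else 0)}
          \<le> exp (- 2 * (c - q * real (card K))\<^sup>2 / real (card K))" by (simp add: Z_def)
  show "{\<omega> \<in> space M. c \<le> (\<Sum>l\<in>K. if s2 \<le> Dev P (Bl l) (\<lambda>i. X i \<omega>) then 1 else 0)} \<in> sets M"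
    using Zm finK unfolding Z_def by measurable
qed

lemma const_bound:
  fixes \<eta> \<mu>4 B pd C M0 :: real
  assumes eta: "\<eta> > 0" and mu: "\<mu>4 > 0" and B: "B > 0" and pd: "pd \<ge> 0"
    and C: "C \<ge> 2 * (16 * sqrt (pd * \<mu>4) * (4 + \<eta>) / \<eta>)" and M0: "M0 \<ge> sqrt (1 / B)"
  shows "2 * (sqrt pd * sqrt (\<mu>4 / (\<eta> / (2 * (4 + \<eta>)) * B))) \<le> 2 * C * M0"
proof -
  define x where "x = (4 + \<eta>) / \<eta>"
  have x1: "x \<ge> 1" using eta by (simp add: x_def field_simps)
  have e1: "\<mu>4 / (\<eta> / (2 * (4 + \<eta>)) * B) = \<mu>4 * (2 * x) * (1 / B)"
    using eta B by (simp add: x_def field_simps)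
  have "sqrt pd * sqrt (\<mu>4 / (\<eta> / (2 * (4 + \<eta>)) * B)) = sqrt (pd * \<mu>4) * sqrt (2 * x) * sqrt (1 / B)"
    unfolding e1 by (simp only: real_sqrt_mult mult.assoc)
  also have "sqrt (2 * x) \<le> 32 * x"
  proof -
    have "2 * x \<le> (32 * x)\<^sup>2" using x1 by (simp add: power2_eq_square)
    then have "sqrt (2 * x) \<le> sqrt ((32 * x)\<^sup>2)" by (rule real_sqrt_le_mono)
    moreover have "sqrt ((32 * x)\<^sup>2) = 32 * x" using x1 by (subst real_sqrt_abs) simp
    ultimately show ?thesis by (rule ord_le_eq_trans)
  qed
  then have "sqrt (pd * \<mu>4) * sqrt (2 * x) * sqrt (1 / B) \<le> sqrt (pd * \<mu>4) * (32 * x) * sqrt (1 / B)"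
    using pd mu B by (intro mult_right_mono mult_left_mono) auto
  also have "sqrt (pd * \<mu>4) * (32 * x) * sqrt (1 / B) \<le> C * M0"
  proof -
    have "sqrt (pd * \<mu>4) * (32 * x) = 2 * (16 * sqrt (pd * \<mu>4) * (4 + \<eta>) / \<eta>)" by (simp add: x_def)
    then have "sqrt (pd * \<mu>4) * (32 * x) \<le> C" using C by simp
    moreover have "0 \<le> sqrt (pd * \<mu>4) * (32 * x)" using x1 pd mu by simp
    ultimately have f: "0 \<le> C" "sqrt (pd * \<mu>4) * (32 * x) \<le> C"
      using order_trans by blast+
    have "0 \<le> sqrt (1 / B)" using B by simp
    then show ?thesis by (rule mult_mono[OF f(2) M0 f(1)])
  qed
  finally show ?thesis by simp
qed

lemma sum_if_card: "finite K \<Longrightarrow> (\<Sum>l\<in>K. if P l then 1 else 0) = real (card {l\<in>K. P l})"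
  by (simp add: sum.If_cases Int_def conj_commute)

theorem theorem3:
  fixes M :: "'w measure" and P :: "(real^'p) measure"
    and X :: "nat \<Rightarrow> 'w \<Rightarrow> real^'p"
    and Inl Out :: "nat set" and Bl :: "nat \<Rightarrow> nat set"
    and N L Bsz d :: nat and \<eta> :: real
    and Qhat :: "'w \<Rightarrow> real^'p^'p" and Qstar :: "real^'p^'p"
  assumes M: "prob_space M"
    and P: "prob_space P" and sets_P: "sets P = sets borel"
    and part: "Inl \<union> Out = {1..N}" "Inl \<inter> Out = {}"
    and blocks_cover: "(\<Union>l\<in>{1..L}. Bl l) = {1..N}"
    and blocks_disj: "\<And>l l'. l \<in> {1..L} \<Longrightarrow> l' \<in> {1..L} \<Longrightarrow> l \<noteq> l' \<Longrightarrow> Bl l \<inter> Bl l' = {}"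
    and blocks_size: "\<And>l. l \<in> {1..L} \<Longrightarrow> card (Bl l) = Bsz"
    and NLB: "N = L * Bsz"
    and NL: "N > L"
    and A1_meas: "\<And>i. i \<in> Inl \<Longrightarrow> X i \<in> measurable M borel"
    and A1_indep: "prob_space.indep_vars M (\<lambda>_. borel) X Inl"
    and A1_distr: "\<And>i. i \<in> Inl \<Longrightarrow> distr M borel (X i) = P"
    and A2: "integrable P (\<lambda>x. norm x ^ 4)"
    and A3: "\<eta> > 0" "real L > (2 + \<eta>) * real (card Out)"
    and Qhat_argmin: "\<And>\<omega>. \<omega> \<in> space M \<Longrightarrow> Qhat \<omega> \<in> proj_mats d \<and>
        (\<forall>Q\<in>proj_mats d. MoM L Bl Bsz (\<lambda>i. X i \<omega>) (Qhat \<omega>) \<le> MoM L Bl Bsz (\<lambda>i. X i \<omega>) Q)"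
    and Qstar_argmin: "Qstar \<in> proj_mats d \<and>
        (\<forall>Q\<in>proj_mats d. (\<integral>x. fQ Qstar x \<partial>P) \<le> (\<integral>x. fQ Q x \<partial>P))"
  shows "let p = real CARD('p);
             \<mu>2 = (\<integral>x. norm x ^ 2 \<partial>P);
             \<mu>4 = (\<integral>x. norm x ^ 4 \<partial>P);
             CP = (\<mu>4 + 2 * \<mu>2\<^sup>2) * (p - real d) + (\<mu>2\<^sup>2 - 1) * (p - real d)\<^sup>2;
             C = 2 * max (sqrt (8 * (4 + \<eta>) * CP / \<eta>))
                         (16 * sqrt ((p - real d) * \<mu>4) * (4 + \<eta>) / \<eta>)
         in \<exists>A\<in>sets M.
              measure M A \<ge> 1 - 2 * exp (- 2 * real L * (2 / (4 + \<eta>) - real (card Out) / real L)\<^sup>2)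
              \<and> (\<forall>\<omega>\<in>A. \<bar>(\<integral>x. fQ (Qhat \<omega>) x \<partial>P) - (\<integral>x. fQ Qstar x \<partial>P)\<bar>
                       \<le> 2 * C * max (sqrt (real L / real N)) (sqrt (real (card Inl)) / real N))"
proof -
  interpret Mp: prob_space M by (rule M)
  interpret Pp: prob_space P by (rule P)
  define \<mu>2 where "\<mu>2 = (\<integral>x. norm x ^ 2 \<partial>P)"
  define \<mu>4 where "\<mu>4 = (\<integral>x. norm x ^ 4 \<partial>P)"
  define p where "p = real CARD('p)"
  define CP where "CP = (\<mu>4 + 2 * \<mu>2\<^sup>2) * (p - real d) + (\<mu>2\<^sup>2 - 1) * (p - real d)\<^sup>2"
  define C where "C = 2 * max (sqrt (8 * (4 + \<eta>) * CP / \<eta>)) (16 * sqrt ((p - real d) * \<mu>4) * (4 + \<eta>) / \<eta>)"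
  define prb where "prb = 1 - 2 * exp (- 2 * real L * (2 / (4 + \<eta>) - real (card Out) / real L)\<^sup>2)"
  define M0 where "M0 = max (sqrt (real L / real N)) (sqrt (real (card Inl)) / real N)"
  define ex where "ex \<omega> = \<bar>(\<integral>x. fQ (Qhat \<omega>) x \<partial>P) - (\<integral>x. fQ Qstar x \<partial>P)\<bar>" for \<omega>
  have dp: "real d \<le> p"
  proof -
    have "rank Qstar = d" using Qstar_argmin by (simp add: proj_mats_def)
    then show ?thesis using rank_bound[of Qstar] by (simp add: p_def)
  qed
  have mu4nn: "\<mu>4 \<ge> 0" unfolding \<mu>4_def by simp
  have C0: "C \<ge> 2 * (16 * sqrt ((p - real d) * \<mu>4) * (4 + \<eta>) / \<eta>)" unfolding C_def by simp
  have Cnn: "C \<ge> 0"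
  proof -
    have "0 \<le> 16 * sqrt ((p - real d) * \<mu>4) * (4 + \<eta>) / \<eta>" using dp mu4nn A3(1) by simp
    then show ?thesis using C0 by linarith
  qed
  have M0nn: "M0 \<ge> 0" unfolding M0_def by (simp add: le_max_iff_disj)
  have Bpos: "Bsz > 0" using NLB NL by (cases "Bsz = 0") auto
  have Lpos: "L > 0" using NLB NL by (cases "L = 0") auto
  have main: "\<exists>A\<in>sets M. prb \<le> measure M A \<and> (\<forall>\<omega>\<in>A. ex \<omega> \<le> 2 * C * M0)"
  proof (cases "\<mu>4 = 0")
    case True
    have "AE y in P. norm y ^ 4 = 0"
      using integral_nonneg_eq_0_iff_AE[OF A2] True unfolding \<mu>4_def by simp
    then have "AE y in P. fQ Q y = 0" for Q
      by (rule AE_mp) (auto simp: fQ_def)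
    then have z: "(\<integral>x. fQ Q x \<partial>P) = 0" for Q by (rule integral_eq_zero_AE)
    have "prb \<le> 1" unfolding prb_def by simp
    then have "prb \<le> measure M (space M)" by (simp add: Mp.prob_space)
    moreover have "ex \<omega> \<le> 2 * C * M0" for \<omega> using z Cnn M0nn by (simp add: ex_def)
    ultimately show ?thesis by blast
  next
    case False
    then have mu4pos: "\<mu>4 > 0" using mu4nn by simp
    define q where "q = \<eta> / (2 * (4 + \<eta>))"
    define s2 where "s2 = \<mu>4 / (q * real Bsz)"
    have qpos: "q > 0" using A3(1) by (simp add: q_def)
    have s2pos: "s2 > 0" using qpos mu4pos Bpos by (simp add: s2_def)
    define K where "K = {l\<in>{1..L}. Bl l \<subseteq> Inl}"
    have blk_sub: "Bl l \<subseteq> {1..N}" if "l \<in> {1..L}" for l using blocks_cover that by blast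
    have blk_fin: "finite (Bl l)" if "l \<in> {1..L}" for l using blk_sub[OF that] finite_subset by blast
    have blk_card: "card (Bl l) = Bsz" if "l \<in> {1..L}" for l using blocks_size that by blast
    have blk_ne: "Bl l \<noteq> {}" if "l \<in> {1..L}" for l using blk_card[OF that] Bpos by auto
    have finOut: "finite Out" using part(1) by (metis finite_Un finite_atLeastAtMost)
    have cdirty: "card ({1..L} - K) \<le> card Out"
    proof -
      define f where "f l = (SOME i. i \<in> Bl l \<inter> Out)" for l
      have fl: "f l \<in> Bl l \<inter> Out" if l: "l \<in> {1..L} - K" for l
      proof -
        have "\<exists>i. i \<in> Bl l \<inter> Out"
        proof -
          obtain i where i: "i \<in> Bl l" "i \<notin> Inl" using l K_def by auto
          have lL: "l \<in> {1..L}" using l by blast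
          have "i \<in> {1..N}" using blk_sub[OF lL] i(1) by blast
          then have "i \<in> Out" using part(1) i(2) by auto
          then show ?thesis using i by blast
        qed
        then show ?thesis unfolding f_def by (rule someI_ex)
      qed
      have inj: "inj_on f ({1..L} - K)"
      proof (rule inj_onI)
        fix l l' assume l: "l \<in> {1..L} - K" and l': "l' \<in> {1..L} - K" and e: "f l = f l'"
        show "l = l'"
        proof (rule ccontr)
          assume "l \<noteq> l'"
          then have "Bl l \<inter> Bl l' = {}" using blocks_disj l l' by auto
          then show False using fl[OF l] fl[OF l'] e by auto
        qed
      qed
      have "f ` ({1..L} - K) \<subseteq> Out" using fl by auto
      then show ?thesis using card_inj_on_le[OF inj _ finOut] by blast
    qed
    have KL: "K \<subseteq> {1..L}" by (auto simp: K_def)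
    have finK: "finite K" using KL finite_subset by blast
    have OL: "real (card Out) < real L"
    proof -
      have "real (card Out) \<le> (2 + \<eta>) * real (card Out)" using A3(1) by (simp add: mult_le_cancel_right1)
      then show ?thesis using A3(2) by linarith
    qed
    have Kne: "K \<noteq> {}"
    proof
      assume "K = {}"
      then have "card {1..L} \<le> card Out" using cdirty by simp
      then show False using OL by simp
    qed
    have cardKL: "card K \<le> L" using card_mono[OF _ KL] by simp
    have cardKpos: "card K > 0" using finK Kne by (simp add: card_gt_0_iff)
    define c where "c = real L / 2 - real (card Out)"
    define \<delta> where "\<delta> = 2 / (4 + \<eta>) - real (card Out) / real L"
    have cq: "c - q * real L = real L * \<delta>"
    proof -
      have e4: "4 + \<eta> > 0" using A3(1) by simp
      have "real L * \<delta> = 2 * real L / (4 + \<eta>) - real (card Out)"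
        using Lpos by (simp add: \<delta>_def right_diff_distrib)
      moreover have "real L / 2 - q * real L = 2 * real L / (4 + \<eta>)"
        using e4 unfolding q_def by (simp add: field_simps)
      ultimately show ?thesis unfolding c_def by linarith
    qed
    have \<delta>pos: "\<delta> > 0"
    proof -
      have "real (card Out) * (2 + \<eta>) < real L" using A3(2) by (simp add: mult.commute)
      then have a: "real (card Out) / real L < 1 / (2 + \<eta>)" using Lpos A3(1)
        by (simp add: field_simps)
      have "1 / (2 + \<eta>) \<le> 2 / (4 + \<eta>)" using A3(1) by (simp add: field_simps)
      then show ?thesis using a by (simp add: \<delta>_def)
    qed
    have cK: "c - q * real (card K) \<ge> real L * \<delta>"
    proof -
      have "q * real (card K) \<le> q * real L" using qpos cardKL by simp
      then show ?thesis using cq by linarith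
    qed
    have c_ge: "c \<ge> q * real (card K)" using cK \<delta>pos Lpos
      by (smt (verit) mult_pos_pos of_nat_0_less_iff)
    have blk: "Bl l \<subseteq> Inl \<and> finite (Bl l) \<and> Bl l \<noteq> {}" if "l \<in> K" for l
      using that KL blk_fin blk_ne by (auto simp: K_def)
    have disj: "disjoint_family_on Bl K"
      unfolding disjoint_family_on_def using blocks_disj KL by blast
    have qb: "\<mu>4 / real (card (Bl l)) / s2 \<le> q" if "l \<in> K" for l
    proof -
      have "card (Bl l) = Bsz" using blk_card KL that by blast
      then show ?thesis using mu4pos Bpos qpos by (simp add: s2_def field_simps)
    qed
    have qb': "(\<integral>y. norm y ^ 4 \<partial>P) / real (card (Bl l)) / s2 \<le> q" if "l \<in> K" for l
      using qb[OF that] by (simp add: \<mu>4_def)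
    define Bad where "Bad = {\<omega> \<in> space M. c \<le> (\<Sum>l\<in>K. if s2 \<le> Dev P (Bl l) (\<lambda>i. X i \<omega>) then 1 else 0)}"
    have Bad_sets: "Bad \<in> sets M" unfolding Bad_def
      by (rule block_hoeffding(1)[OF M A1_meas A1_indep A1_distr P sets_P A2 finK Kne blk disj s2pos qb' c_ge])
    have HB2: "measure M Bad \<le> exp (- 2 * (c - q * real (card K))\<^sup>2 / real (card K))" unfolding Bad_def
      by (rule block_hoeffding(2)[OF M A1_meas A1_indep A1_distr P sets_P A2 finK Kne blk disj s2pos qb' c_ge])
    have expb: "exp (- 2 * (c - q * real (card K))\<^sup>2 / real (card K)) \<le> exp (- 2 * real L * \<delta>\<^sup>2)"
    proof -
      have h0: "0 \<le> real L * \<delta>" using \<delta>pos by simp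
      have "(real L * \<delta>)\<^sup>2 \<le> (c - q * real (card K))\<^sup>2" by (rule power_mono[OF cK h0])
      then have "(real L * \<delta>)\<^sup>2 / real L \<le> (c - q * real (card K))\<^sup>2 / real L"
        using Lpos by (simp add: divide_right_mono)
      also have "\<dots> \<le> (c - q * real (card K))\<^sup>2 / real (card K)"
        using cardKL cardKpos by (intro divide_left_mono) auto
      finally have "real L * \<delta>\<^sup>2 \<le> (c - q * real (card K))\<^sup>2 / real (card K)"
        using Lpos by (simp add: power2_eq_square mult_ac)
      then show ?thesis by simp
    qed
    define A where "A = space M - Bad"
    have A_sets: "A \<in> sets M" using Bad_sets by (simp add: A_def)
    have probA: "prb \<le> measure M A"
    proof -
      have "measure M A = 1 - measure M Bad" unfolding A_def by (rule Mp.prob_compl[OF Bad_sets])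
      moreover have "measure M Bad \<le> exp (- 2 * real L * \<delta>\<^sup>2)"
        using HB2 expb by (rule order_trans)
      moreover have "0 \<le> exp (- 2 * real L * \<delta>\<^sup>2)" by simp
      ultimately show ?thesis unfolding prb_def \<delta>_def by linarith
    qed
    define t where "t = sqrt (p - real d) * sqrt s2"
    have tb: "2 * t \<le> 2 * C * M0"
    proof -
      have M0': "M0 \<ge> sqrt (1 / real Bsz)"
        using Lpos NLB by (simp add: M0_def le_max_iff_disj)
      show ?thesis unfolding t_def s2_def q_def
        by (rule const_bound[OF A3(1) mu4pos _ _ C0 M0']) (use Bpos dp in auto)
    qed
    have good: "ex \<omega> \<le> 2 * t" if \<omega>A: "\<omega> \<in> A" for \<omega>
    proof -
      have \<omega>: "\<omega> \<in> space M" using \<omega>A by (simp add: A_def)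
      define D where "D l = Dev P (Bl l) (\<lambda>i. X i \<omega>)" for l
      have nb: "(\<Sum>l\<in>K. if s2 \<le> D l then 1 else 0) < c"
        using \<omega>A \<omega> by (auto simp: A_def Bad_def D_def)
      define Gd where "Gd = {l\<in>K. D l < s2}"
      have GdK: "Gd \<subseteq> K" by (auto simp: Gd_def)
      have sZ: "(\<Sum>l\<in>K. if s2 \<le> D l then 1 else 0) = real (card (K - Gd))"
      proof -
        have "{l\<in>K. s2 \<le> D l} = K - Gd" by (auto simp: Gd_def)
        then show ?thesis using sum_if_card[OF finK, of "\<lambda>l. s2 \<le> D l"] by simp
      qed
      have cL: "card {1..L} = card ({1..L} - K) + card (K - Gd) + card Gd"
      proof -
        have "card {1..L} = card ({1..L} - K) + card K"
          using KL by (metis card_Diff_subset card_mono finK finite_atLeastAtMost le_add_diff_inverse2)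
        moreover have "card K = card (K - Gd) + card Gd"
          using GdK finK by (metis card_Diff_subset card_mono finite_subset le_add_diff_inverse2)
        ultimately show ?thesis by simp
      qed
      have Lg: "real L < 2 * real (card Gd)"
      proof -
        have "real L = real (card ({1..L} - K)) + real (card (K - Gd)) + real (card Gd)"
          using cL by simp
        then show ?thesis using cdirty nb sZ unfolding c_def by linarith
      qed
      have close: "\<bar>(1 / real Bsz) * (\<Sum>i\<in>Bl l. fQ Q (X i \<omega>)) - (\<integral>y. fQ Q y \<partial>P)\<bar> \<le> t"
        if Q: "Q \<in> proj_mats d" and l: "l \<in> Gd" for Q l
      proof -
        have lL: "l \<in> {1..L}" using l GdK KL by auto
        have "\<bar>(1 / real (card (Bl l))) * (\<Sum>i\<in>Bl l. fQ Q (X i \<omega>)) - (\<integral>y. fQ Q y \<partial>P)\<bar>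
            \<le> sqrt (real CARD('p) - real d) * sqrt (Dev P (Bl l) (\<lambda>i. X i \<omega>))"
          by (rule dev_bound[OF Q P sets_P A2 blk_fin[OF lL]])
        also have "\<dots> \<le> t" unfolding t_def p_def
          using l dp by (intro mult_left_mono real_sqrt_le_mono) (auto simp: Gd_def D_def p_def)
        finally show ?thesis using blk_card[OF lL] by simp
      qed
      have momb: "(\<integral>y. fQ Q y \<partial>P) - t \<le> MoM L Bl Bsz (\<lambda>i. X i \<omega>) Q \<and>
                  MoM L Bl Bsz (\<lambda>i. X i \<omega>) Q \<le> (\<integral>y. fQ Q y \<partial>P) + t"
        if Q: "Q \<in> proj_mats d" for Q
      proof -
        define f where "f l = (1 / real Bsz) * (\<Sum>i\<in>Bl l. fQ Q (X i \<omega>))" for l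
        define Pr where "Pr v = ((\<integral>y. fQ Q y \<partial>P) - t \<le> v \<and> v \<le> (\<integral>y. fQ Q y \<partial>P) + t)" for v
        have len: "length (map f [1..<L+1]) = L" by simp
        have sL: "set [1..<L+1] = {1..L}" by auto
        have "length (filter Pr (map f [1..<L+1])) = length (filter (Pr \<circ> f) [1..<L+1])"
          by (simp add: filter_map)
        also have "\<dots> = card ({l. (Pr \<circ> f) l} \<inter> set [1..<L+1])"
          by (rule distinct_length_filter) simp
        also have "\<dots> = card ({l. Pr (f l)} \<inter> {1..L})" by (simp only: sL comp_def)
        finally have "length (filter Pr (map f [1..<L+1])) = card ({l. Pr (f l)} \<inter> {1..L})" .
        moreover have "Gd \<subseteq> {l. Pr (f l)} \<inter> {1..L}"
        proof
          fix l assume l: "l \<in> Gd"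
          have "\<bar>f l - (\<integral>y. fQ Q y \<partial>P)\<bar> \<le> t" using close[OF Q l] by (simp add: f_def)
          then have "Pr (f l)" unfolding Pr_def by linarith
          then show "l \<in> {l. Pr (f l)} \<inter> {1..L}" using l GdK KL by auto
        qed
        ultimately have "card Gd \<le> length (filter Pr (map f [1..<L+1]))"
          by (simp add: card_mono)
        then have "length (map f [1..<L+1]) < 2 * length (filter Pr (map f [1..<L+1]))"
          using Lg len by linarith
        then have "Pr (median (map f [1..<L+1]))"
          using median_bound unfolding Pr_def by blast
        then show ?thesis unfolding Pr_def MoM_def f_def by simp
      qed
      have Qh: "Qhat \<omega> \<in> proj_mats d"
        and Qmin: "MoM L Bl Bsz (\<lambda>i. X i \<omega>) (Qhat \<omega>) \<le> MoM L Bl Bsz (\<lambda>i. X i \<omega>) Qstar"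
        using Qhat_argmin[OF \<omega>] Qstar_argmin by auto
      have Qs: "Qstar \<in> proj_mats d" using Qstar_argmin by simp
      have st: "(\<integral>x. fQ Qstar x \<partial>P) \<le> (\<integral>x. fQ (Qhat \<omega>) x \<partial>P)" using Qstar_argmin Qh by blast
      show ?thesis unfolding ex_def using momb[OF Qh] momb[OF Qs] Qmin st by linarith
    qed
    show ?thesis using A_sets probA good tb by (meson order_trans)
  qed
  then show ?thesis
    unfolding Let_def prb_def ex_def M0_def C_def CP_def \<mu>4_def \<mu>2_def p_def by simp
qed

end
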